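(* Let $\Omega\subset\mathbb{R}^n$ be a domain, $\mathcal{S}$ a basis of shapes in $\Omega$ and $1\le p<\infty$. Then $\mathrm{BMO}^p_{\mathcal{S}}(\Omega)$ is complete: if $\{f_i\}\subset\mathrm{BMO}^p_{\mathcal{S}}(\Omega)$ satisfies $\|f_i-f_j\|_{\mathrm{BMO}^p_{\mathcal{S}}}\to0$ as $i,j\to\infty$, then there exists $f\in\mathrm{BMO}^p_{\mathcal{S}}(\Omega)$ with $\|f_i-f\|_{\mathrm{BMO}^p_{\mathcal{S}}}\to0$.
   Context: A domain is an open connected set. A shape is an open set $S\subset\mathbb{R}^n$ with $0<|S|<\infty$. A basis of shapes in $\Omega$ is a collection of shapes contained in $\Omega$ covering $\Omega$. For $f\in L^1(S)$, $f_S=\frac1{|S|}\int_Sf$. $\mathrm{BMO}^p_{\mathcal{S}}(\Omega)$ is the space of functions $f$ with $f\in L^1(S)$ for all $S\in\mathcal{S}$ such that there is $K\ge0$ with $\big(\frac1{|S|}\int_S|f-f_S|^p\big)^{1/p}\le K$ for all $S\in\mathcal{S}$; $\|f\|_{\mathrm{BMO}^p_{\mathcal{S}}}$ is the infimum of such $K$ (a seminorm, vanishing exactly on a.e. constant functions). *)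

theory Defs
  imports "HOL-Analysis.Analysis"
begin

definition domain :: "'a::euclidean_space set \<Rightarrow> bool" where
  "domain \<Omega> \<longleftrightarrow> open \<Omega> \<and> connected \<Omega>"

definition shape :: "'a::euclidean_space set \<Rightarrow> bool" where
  "shape S \<longleftrightarrow> open S \<and> 0 < emeasure lebesgue S \<and> emeasure lebesgue S < \<infinity>"

definition basis_of_shapes :: "'a::euclidean_space set set \<Rightarrow> 'a set \<Rightarrow> bool" where
  "basis_of_shapes \<S> \<Omega> \<longleftrightarrow> (\<forall>S\<in>\<S>. shape S \<and> S \<subseteq> \<Omega>) \<and> \<Union>\<S> = \<Omega>"

definition avg :: "'a::euclidean_space set \<Rightarrow> ('a \<Rightarrow> real) \<Rightarrow> real" where
  "avg S f = (1 / measure lebesgue S) * (LINT x:S|lebesgue. f x)"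

definition osc :: "real \<Rightarrow> 'a::euclidean_space set \<Rightarrow> ('a \<Rightarrow> real) \<Rightarrow> real" where
  "osc p S f = ((1 / measure lebesgue S) * (LINT x:S|lebesgue. \<bar>f x - avg S f\<bar> powr p)) powr (1 / p)"

text \<open>Membership in BMO^p_S: f is integrable on each shape, the p-th power of the
  oscillation is integrable on each shape (so the integral is a genuine finite one),
  and the oscillations are uniformly bounded.\<close>
definition BMO :: "real \<Rightarrow> 'a::euclidean_space set set \<Rightarrow> ('a \<Rightarrow> real) set" where
  "BMO p \<S> = {f. (\<forall>S\<in>\<S>. set_integrable lebesgue S f
        \<and> set_integrable lebesgue S (\<lambda>x. \<bar>f x - avg S f\<bar> powr p))
      \<and> (\<exists>K\<ge>0. \<forall>S\<in>\<S>. osc p S f \<le> K)}"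

definition bmo_norm :: "real \<Rightarrow> 'a::euclidean_space set set \<Rightarrow> ('a \<Rightarrow> real) \<Rightarrow> real" where
  "bmo_norm p \<S> f = Inf {K. K \<ge> 0 \<and> (\<forall>S\<in>\<S>. osc p S f \<le> K)}"

end

theory Submission imports Defs begin

definition mavg :: "'b measure \<Rightarrow> ('b \<Rightarrow> real) \<Rightarrow> real" where
  "mavg M f = (1 / measure M (space M)) * integral\<^sup>L M f"

definition mE :: "real \<Rightarrow> 'b measure \<Rightarrow> ('b \<Rightarrow> real) \<Rightarrow> real" where
  "mE p M f = (1 / measure M (space M)) * (\<integral>x. \<bar>f x - mavg M f\<bar> powr p \<partial>M)"

lemma shape_sets: "shape S \<Longrightarrow> S \<in> sets lebesgue"
  unfolding shape_def by (simp add: borel_open)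
lemma shape_lmeas: "shape S \<Longrightarrow> S \<in> lmeasurable"
  by (rule fmeasurableI[OF shape_sets]) (auto simp only: shape_def)
lemma shape_fin: "shape S \<Longrightarrow> finite_measure (lebesgue_on S)"
  by (rule finite_measure_lebesgue_on[OF shape_lmeas])
lemma shape_meas: "shape S \<Longrightarrow> measure (lebesgue_on S) (space (lebesgue_on S)) = measure lebesgue S"
  using shape_sets[of S] by (simp add: measure_restrict_space)
lemma shape_meas2: "shape S \<Longrightarrow> measure (lebesgue_on S) S = measure lebesgue S"
  using shape_sets[of S] by (simp add: measure_restrict_space)
lemma shape_pos: "shape S \<Longrightarrow> 0 < measure lebesgue S"
proof -
  assume "shape S"
  then have h: "0 < emeasure lebesgue S" "emeasure lebesgue S < \<infinity>" unfolding shape_def by auto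
  then have "emeasure lebesgue S = ennreal (measure lebesgue S)"
    by (intro emeasure_eq_ennreal_measure) auto
  with h(1) show ?thesis by simp
qed

lemma avg_eq: "shape S \<Longrightarrow> avg S f = mavg (lebesgue_on S) f"
  unfolding avg_def mavg_def set_lebesgue_integral_def using shape_sets[of S]
  by (simp add: shape_meas shape_meas2 integral_restrict_space)

lemma osc_eq: "shape S \<Longrightarrow> osc p S f = mE p (lebesgue_on S) f powr (1/p)"
  unfolding osc_def mE_def set_lebesgue_integral_def using shape_sets[of S]
  by (simp add: shape_meas shape_meas2 integral_restrict_space avg_eq)

lemma sint_eq: "shape S \<Longrightarrow> set_integrable lebesgue S (f::_\<Rightarrow>real) \<longleftrightarrow> integrable (lebesgue_on S) f"
  using shape_sets[of S] integrable_restrict_space[of S lebesgue f] unfolding set_integrable_def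
  by simp

lemma pw_quasi:
  fixes a b p :: real assumes "p > 0"
  shows "\<bar>a - b\<bar> powr p \<le> 2 powr p * (\<bar>a\<bar> powr p + \<bar>b\<bar> powr p)"
proof -
  have "\<bar>a - b\<bar> \<le> 2 * max \<bar>a\<bar> \<bar>b\<bar>" using abs_triangle_ineq4[of a b] by (auto simp: max_def)
  then have "\<bar>a - b\<bar> powr p \<le> (2 * max \<bar>a\<bar> \<bar>b\<bar>) powr p"
    using assms by (intro powr_mono2) auto
  also have "\<dots> = 2 powr p * max \<bar>a\<bar> \<bar>b\<bar> powr p"
    by (simp add: powr_mult)
  also have "max \<bar>a\<bar> \<bar>b\<bar> powr p \<le> \<bar>a\<bar> powr p + \<bar>b\<bar> powr p"
    by (cases "\<bar>a\<bar> \<le> \<bar>b\<bar>") (auto simp: max_def)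
  finally show ?thesis by (simp add: mult_left_mono)
qed

lemma pw_l1:
  fixes t e p :: real assumes "p \<ge> 1" "e > 0"
  shows "\<bar>t\<bar> \<le> e + \<bar>t\<bar> powr p / e powr (p - 1)"
proof (cases "\<bar>t\<bar> \<le> e")
  case True then show ?thesis by (simp add: divide_nonneg_pos add_increasing2)
next
  case False
  then have t: "\<bar>t\<bar> > e" by simp
  have "\<bar>t\<bar> powr p = \<bar>t\<bar> * \<bar>t\<bar> powr (p - 1)"
    using t assms by (simp add: powr_mult_base)
  also have "\<dots> \<ge> \<bar>t\<bar> * e powr (p - 1)"
    using t assms by (intro mult_left_mono powr_mono2) auto
  finally have "\<bar>t\<bar> \<le> \<bar>t\<bar> powr p / e powr (p - 1)"
    using assms by (simp add: pos_le_divide_eq)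
  then show ?thesis using assms by simp
qed

lemma mavg_diff:
  assumes "integrable M u" "integrable M w"
  shows "mavg M (\<lambda>x. u x - w x) = mavg M u - mavg M w"
  using assms unfolding mavg_def by (simp add: right_diff_distrib)

lemma mavg_shift:
  assumes "finite_measure M" "integrable M u" "measure M (space M) > 0"
  shows "mavg M (\<lambda>x. u x + c) = mavg M u + c"
proof -
  interpret finite_measure M by fact
  show ?thesis
    using assms unfolding mavg_def by (simp add: field_simps)
qed

lemma quasi:
  assumes fm: "finite_measure M" and p: "p > 0"
    and iu: "integrable M u" and iw: "integrable M w"
    and pu: "integrable M (\<lambda>x. \<bar>u x - mavg M u\<bar> powr p)"
    and pw: "integrable M (\<lambda>x. \<bar>w x - mavg M w\<bar> powr p)"
  shows "integrable M (\<lambda>x. \<bar>(u x - w x) - mavg M (\<lambda>x. u x - w x)\<bar> powr p)"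
    and "(\<integral>x. \<bar>(u x - w x) - mavg M (\<lambda>x. u x - w x)\<bar> powr p \<partial>M)
         \<le> 2 powr p * ((\<integral>x. \<bar>u x - mavg M u\<bar> powr p \<partial>M) + (\<integral>x. \<bar>w x - mavg M w\<bar> powr p \<partial>M))"
proof -
  have eq: "(\<lambda>x. \<bar>(u x - w x) - mavg M (\<lambda>x. u x - w x)\<bar> powr p)
      = (\<lambda>x. \<bar>(u x - mavg M u) - (w x - mavg M w)\<bar> powr p)"
    unfolding mavg_diff[OF iu iw] by (simp add: algebra_simps)
  have [measurable]: "u \<in> borel_measurable M" "w \<in> borel_measurable M"
    using iu iw by auto
  have meas: "(\<lambda>x. \<bar>(u x - mavg M u) - (w x - mavg M w)\<bar> powr p) \<in> borel_measurable M"
    by measurable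
  have bnd: "\<And>x. \<bar>(u x - mavg M u) - (w x - mavg M w)\<bar> powr p
      \<le> 2 powr p * (\<bar>u x - mavg M u\<bar> powr p + \<bar>w x - mavg M w\<bar> powr p)"
    using pw_quasi[OF p] by blast
  have ib: "integrable M (\<lambda>x. 2 powr p * (\<bar>u x - mavg M u\<bar> powr p + \<bar>w x - mavg M w\<bar> powr p))"
    using pu pw by auto
  show i1: "integrable M (\<lambda>x. \<bar>(u x - w x) - mavg M (\<lambda>x. u x - w x)\<bar> powr p)"
    unfolding eq
    by (rule Bochner_Integration.integrable_bound[OF ib meas]) (use bnd in auto)
  have "(\<integral>x. \<bar>(u x - w x) - mavg M (\<lambda>x. u x - w x)\<bar> powr p \<partial>M)
     \<le> (\<integral>x. 2 powr p * (\<bar>u x - mavg M u\<bar> powr p + \<bar>w x - mavg M w\<bar> powr p) \<partial>M)"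
    using i1 ib bnd unfolding eq by (intro integral_mono) auto
  also have "\<dots> = 2 powr p * ((\<integral>x. \<bar>u x - mavg M u\<bar> powr p \<partial>M) + (\<integral>x. \<bar>w x - mavg M w\<bar> powr p \<partial>M))"
    using pu pw by simp
  finally show "(\<integral>x. \<bar>(u x - w x) - mavg M (\<lambda>x. u x - w x)\<bar> powr p \<partial>M)
         \<le> 2 powr p * ((\<integral>x. \<bar>u x - mavg M u\<bar> powr p \<partial>M) + (\<integral>x. \<bar>w x - mavg M w\<bar> powr p \<partial>M))" .
qed

lemma l1_bound:
  assumes fm: "finite_measure M" and p: "p \<ge> 1" and e: "e > 0"
   and iv: "integrable M v" and ip: "integrable M (\<lambda>x. \<bar>v x\<bar> powr p)"
   and b: "(\<integral>x. \<bar>v x\<bar> powr p \<partial>M) \<le> e powr p * measure M (space M)"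
  shows "(\<integral>x. \<bar>v x\<bar> \<partial>M) \<le> 2 * e * measure M (space M)"
proof -
  interpret finite_measure M by fact
  have "(\<integral>x. \<bar>v x\<bar> \<partial>M) \<le> (\<integral>x. e + \<bar>v x\<bar> powr p / e powr (p - 1) \<partial>M)"
    using iv ip pw_l1[OF p e] by (intro integral_mono) auto
  also have "\<dots> = e * measure M (space M) + (\<integral>x. \<bar>v x\<bar> powr p \<partial>M) / e powr (p - 1)"
    using ip by (simp add: integral_divide_zero)
  also have "\<dots> \<le> e * measure M (space M) + e powr p * measure M (space M) / e powr (p - 1)"
    using b e by (intro add_left_mono divide_right_mono) auto
  also have "e powr p * measure M (space M) / e powr (p - 1) = e * measure M (space M)"
  proof -
    have "e * e powr (p - 1) = e powr p" using e by (simp add: powr_mult_base)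
    then show ?thesis using e by (simp add: field_simps)
  qed
  finally show ?thesis by simp
qed

lemma fatou_osc:
  assumes fm: "finite_measure M" and p: "p > 0"
   and iu: "integrable M u" and iss: "\<And>n. integrable M (s n)" and ig: "integrable M g"
   and ae: "AE x in M. (\<lambda>n. s n x) \<longlonglongrightarrow> g x"
   and int: "(\<lambda>n. integral\<^sup>L M (s n)) \<longlonglongrightarrow> integral\<^sup>L M g"
   and ev: "\<And>n. n \<ge> n0 \<Longrightarrow> integrable M (\<lambda>x. \<bar>(u x - s n x) - mavg M (\<lambda>x. u x - s n x)\<bar> powr p)
        \<and> (\<integral>x. \<bar>(u x - s n x) - mavg M (\<lambda>x. u x - s n x)\<bar> powr p \<partial>M) \<le> B"
   and B: "B \<ge> 0"
  shows "integrable M (\<lambda>x. \<bar>(u x - g x) - mavg M (\<lambda>x. u x - g x)\<bar> powr p)"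
    and "(\<integral>x. \<bar>(u x - g x) - mavg M (\<lambda>x. u x - g x)\<bar> powr p \<partial>M) \<le> B"
proof -
  define a where "a n = mavg M (\<lambda>x. u x - s n x)" for n
  define ai where "ai = mavg M (\<lambda>x. u x - g x)"
  define W where "W n x = \<bar>(u x - s n x) - a n\<bar> powr p" for n x
  define Wi where "Wi x = \<bar>(u x - g x) - ai\<bar> powr p" for x
  have [measurable]: "u \<in> borel_measurable M" "g \<in> borel_measurable M" "\<And>n. s n \<in> borel_measurable M"
    using iu ig iss by auto
  have mW[measurable]: "\<And>n. W n \<in> borel_measurable M" unfolding W_def by measurable
  have mWi[measurable]: "Wi \<in> borel_measurable M" unfolding Wi_def by measurable
  have aeq: "a = (\<lambda>n. (1 / measure M (space M)) * (integral\<^sup>L M u - integral\<^sup>L M (s n)))"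
    unfolding a_def mavg_def using iu iss by (simp add: fun_eq_iff)
  have aieq: "ai = (1 / measure M (space M)) * (integral\<^sup>L M u - integral\<^sup>L M g)"
    unfolding ai_def mavg_def using iu ig by simp
  have la: "a \<longlonglongrightarrow> ai"
    unfolding aeq aieq by (intro tendsto_intros int)
  have aeW: "AE x in M. (\<lambda>n. W n x) \<longlonglongrightarrow> Wi x"
    using ae
  proof eventually_elim
    case (elim x)
    have "(\<lambda>n. \<bar>(u x - s n x) - a n\<bar>) \<longlonglongrightarrow> \<bar>(u x - g x) - ai\<bar>"
      using elim la by (intro tendsto_intros)
    then show ?case unfolding W_def Wi_def
      using p by (intro tendsto_powr') auto
  qed
  have "(\<integral>\<^sup>+x. ennreal (Wi x) \<partial>M) = (\<integral>\<^sup>+x. liminf (\<lambda>n. ennreal (W n x)) \<partial>M)"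
    using aeW
  proof (intro nn_integral_cong_AE, eventually_elim)
    case (elim x)
    then have "(\<lambda>n. ennreal (W n x)) \<longlonglongrightarrow> ennreal (Wi x)"
      by (intro tendsto_ennrealI)
    then show ?case by (simp add: lim_imp_Liminf)
  qed
  also have "\<dots> \<le> liminf (\<lambda>n. \<integral>\<^sup>+x. ennreal (W n x) \<partial>M)"
    by (intro nn_integral_liminf) measurable
  also have "\<dots> \<le> ennreal B"
  proof (intro Liminf_le)
    show "\<forall>\<^sub>F n in sequentially. (\<integral>\<^sup>+x. ennreal (W n x) \<partial>M) \<le> ennreal B"
      unfolding eventually_sequentially
    proof (intro exI allI impI)
      fix n assume "n0 \<le> n"
      then have i: "integrable M (W n)" and b: "integral\<^sup>L M (W n) \<le> B"
        using ev[of n] unfolding W_def a_def by auto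
      have "(\<integral>\<^sup>+x. ennreal (W n x) \<partial>M) = ennreal (integral\<^sup>L M (W n))"
        by (intro nn_integral_eq_integral i) (auto simp: W_def)
      also have "\<dots> \<le> ennreal B" using b by (rule ennreal_leI)
      finally show "(\<integral>\<^sup>+x. ennreal (W n x) \<partial>M) \<le> ennreal B" .
    qed
  qed simp
  finally have nn: "(\<integral>\<^sup>+x. ennreal (Wi x) \<partial>M) \<le> ennreal B" .
  have iWi: "integrable M Wi"
  proof (rule integrableI_bounded)
    show "(\<integral>\<^sup>+x. ennreal (norm (Wi x)) \<partial>M) < \<infinity>"
      using nn by (simp add: Wi_def le_less_trans)
  qed measurable
  then show "integrable M (\<lambda>x. \<bar>(u x - g x) - mavg M (\<lambda>x. u x - g x)\<bar> powr p)"
    unfolding Wi_def ai_def .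
  have "ennreal (integral\<^sup>L M Wi) = (\<integral>\<^sup>+x. ennreal (Wi x) \<partial>M)"
    by (intro nn_integral_eq_integral[symmetric] iWi) (auto simp: Wi_def)
  with nn have "ennreal (integral\<^sup>L M Wi) \<le> ennreal B" by simp
  then have "integral\<^sup>L M Wi \<le> B" using B by (metis ennreal_le_iff)
  then show "(\<integral>x. \<bar>(u x - g x) - mavg M (\<lambda>x. u x - g x)\<bar> powr p \<partial>M) \<le> B"
    unfolding Wi_def ai_def .
qed

lemma pow_le:
  fixes x K p :: real
  assumes "0 \<le> x" "0 \<le> K" "p > 0"
  shows "x powr (1/p) \<le> K \<longleftrightarrow> x \<le> K powr p"
proof
  assume h: "x powr (1/p) \<le> K"
  have "x = (x powr (1/p)) powr p" using assms by (simp add: powr_powr)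
  also have "\<dots> \<le> K powr p" using h assms by (intro powr_mono2) auto
  finally show "x \<le> K powr p" .
next
  assume h: "x \<le> K powr p"
  have "x powr (1/p) \<le> (K powr p) powr (1/p)" using h assms by (intro powr_mono2) auto
  also have "\<dots> = K" using assms by (simp add: powr_powr)
  finally show "x powr (1/p) \<le> K" .
qed

lemma mE_nonneg: "measure M (space M) \<ge> 0 \<Longrightarrow> 0 \<le> mE p M f"
  unfolding mE_def by (intro mult_nonneg_nonneg Bochner_Integration.integral_nonneg) auto

lemma mE_int: "measure M (space M) > 0 \<Longrightarrow>
   (\<integral>x. \<bar>f x - mavg M f\<bar> powr p \<partial>M) = measure M (space M) * mE p M f"
  unfolding mE_def by simp

lemma shape_m: "shape S \<Longrightarrow> measure (lebesgue_on S) (space (lebesgue_on S)) > 0"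
  using shape_meas shape_pos by metis

lemma osc_le_iff: "shape S \<Longrightarrow> p > 0 \<Longrightarrow> K \<ge> 0 \<Longrightarrow> osc p S f \<le> K \<longleftrightarrow> mE p (lebesgue_on S) f \<le> K powr p"
  unfolding osc_eq by (intro pow_le mE_nonneg) (auto dest: shape_m)

lemma bmo_diff:
  assumes sh: "\<forall>S\<in>\<S>. shape S" and p: "p \<ge> 1" and u: "u \<in> BMO p \<S>" and w: "w \<in> BMO p \<S>"
  shows "(\<lambda>x. u x - w x) \<in> BMO p \<S>"
proof -
  obtain Ku where Ku: "Ku \<ge> 0" "\<forall>S\<in>\<S>. osc p S u \<le> Ku" using u unfolding BMO_def by auto
  obtain Kw where Kw: "Kw \<ge> 0" "\<forall>S\<in>\<S>. osc p S w \<le> Kw" using w unfolding BMO_def by auto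
  define K where "K = (2 powr p * (Ku powr p + Kw powr p)) powr (1/p)"
  have main: "set_integrable lebesgue S (\<lambda>x. u x - w x)
     \<and> set_integrable lebesgue S (\<lambda>x. \<bar>(u x - w x) - avg S (\<lambda>x. u x - w x)\<bar> powr p)
     \<and> osc p S (\<lambda>x. u x - w x) \<le> K" if S: "S \<in> \<S>" for S
  proof -
    have shS: "shape S" using sh S by auto
    let ?M = "lebesgue_on S"
    have fm: "finite_measure ?M" using shape_fin[OF shS] .
    have m: "measure ?M (space ?M) > 0" using shape_m[OF shS] .
    have iu: "integrable ?M u" and pu: "integrable ?M (\<lambda>x. \<bar>u x - mavg ?M u\<bar> powr p)"
      using u S unfolding BMO_def by (auto simp: sint_eq[OF shS] avg_eq[OF shS])
    have iw: "integrable ?M w" and pw: "integrable ?M (\<lambda>x. \<bar>w x - mavg ?M w\<bar> powr p)"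
      using w S unfolding BMO_def by (auto simp: sint_eq[OF shS] avg_eq[OF shS])
    have eu: "mE p ?M u \<le> Ku powr p" using Ku S osc_le_iff[OF shS, of p Ku u] p by auto
    have ew: "mE p ?M w \<le> Kw powr p" using Kw S osc_le_iff[OF shS, of p Kw w] p by auto
    note q = quasi[OF fm _ iu iw pu pw]
    have "measure ?M (space ?M) * mE p ?M (\<lambda>x. u x - w x)
        = (\<integral>x. \<bar>(u x - w x) - mavg ?M (\<lambda>x. u x - w x)\<bar> powr p \<partial>?M)"
      by (rule mE_int[symmetric, OF m])
    also have "\<dots> \<le> 2 powr p * ((\<integral>x. \<bar>u x - mavg ?M u\<bar> powr p \<partial>?M) + (\<integral>x. \<bar>w x - mavg ?M w\<bar> powr p \<partial>?M))"
      by (rule q(2)) (use p in simp)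
    also have "\<dots> = measure ?M (space ?M) * (2 powr p * (mE p ?M u + mE p ?M w))"
      unfolding mE_int[OF m] by (simp add: algebra_simps)
    finally have "measure ?M (space ?M) * mE p ?M (\<lambda>x. u x - w x)
        \<le> measure ?M (space ?M) * (2 powr p * (mE p ?M u + mE p ?M w))" .
    then have "mE p ?M (\<lambda>x. u x - w x) \<le> 2 powr p * (mE p ?M u + mE p ?M w)"
      using m by (rule mult_left_le_imp_le)
    also have "\<dots> \<le> 2 powr p * (Ku powr p + Kw powr p)"
      using eu ew by (intro mult_left_mono add_mono) auto
    finally have "osc p S (\<lambda>x. u x - w x) \<le> K"
      unfolding osc_eq[OF shS] K_def using p m by (intro powr_mono2 mE_nonneg) auto
    moreover have "integrable ?M (\<lambda>x. u x - w x)" using iu iw by auto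
    ultimately show ?thesis using q(1) p
      by (simp add: sint_eq[OF shS] avg_eq[OF shS])
  qed
  have "K \<ge> 0" unfolding K_def by simp
  then show ?thesis using main unfolding BMO_def by blast
qed

lemma osc_le_norm: "f \<in> BMO p \<S> \<Longrightarrow> S \<in> \<S> \<Longrightarrow> osc p S f \<le> bmo_norm p \<S> f"
  unfolding bmo_norm_def BMO_def by (intro cInf_greatest) auto

lemma norm_le: "K \<ge> 0 \<Longrightarrow> \<forall>S\<in>\<S>. osc p S f \<le> K \<Longrightarrow> bmo_norm p \<S> f \<le> K"
  unfolding bmo_norm_def by (intro cInf_lower) (auto simp: bdd_below_def)

lemma norm_nonneg: "f \<in> BMO p \<S> \<Longrightarrow> 0 \<le> bmo_norm p \<S> f"
  unfolding bmo_norm_def BMO_def by (intro cInf_greatest) auto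

lemma open_pos:
  assumes "open U" "U \<noteq> {}" "U \<subseteq> S" "shape S"
  shows "0 < measure lebesgue U"
proof -
  obtain x where x: "x \<in> U" using assms by auto
  obtain r where r: "r > 0" "ball x r \<subseteq> U" using assms(1) x open_contains_ball by blast
  have "0 < measure lborel (ball x r)" by (rule content_ball_pos[OF r(1)])
  also have "measure lborel (ball x r) = measure lebesgue (ball x r)"
    by (simp add: measure_completion)
  also have "\<dots> \<le> measure lebesgue U"
  proof (rule measure_mono_fmeasurable[OF r(2)])
    show "ball x r \<in> sets lebesgue" by simp
    have "U \<in> sets lebesgue" using assms(1) by (simp add: borel_open)
    moreover have "emeasure lebesgue U < \<infinity>"
      using emeasure_mono[OF assms(3), of lebesgue] shape_sets[OF assms(4)] assms(4)
      unfolding shape_def by (meson le_less_trans)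
    ultimately show "U \<in> fmeasurable lebesgue" by (intro fmeasurableI)
  qed
  finally show ?thesis .
qed

lemma ind_int:
  assumes sh: "shape S" and i: "integrable (lebesgue_on S) (f::_\<Rightarrow>real)"
  shows "integrable lebesgue (\<lambda>x. indicator S x * f x)"
    and "(\<integral>x. indicator S x * f x \<partial>lebesgue) = integral\<^sup>L (lebesgue_on S) f"
proof -
  show "integrable lebesgue (\<lambda>x. indicator S x * f x)"
    using i sint_eq[OF sh, of f] unfolding set_integrable_def by simp
  show "(\<integral>x. indicator S x * f x \<partial>lebesgue) = integral\<^sup>L (lebesgue_on S) f"
    using shape_sets[OF sh] by (simp add: integral_restrict_space)
qed

lemma avg_close:
  assumes shS: "shape S" and shT: "shape T" and ne: "S \<inter> T \<noteq> {}"
   and hS: "integrable (lebesgue_on S) h" and hT: "integrable (lebesgue_on T) h"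
   and bS: "(\<integral>x. \<bar>h x - avg S h\<bar> \<partial>lebesgue_on S) \<le> BS"
   and bT: "(\<integral>x. \<bar>h x - avg T h\<bar> \<partial>lebesgue_on T) \<le> BT"
  shows "\<bar>avg S h - avg T h\<bar> * measure lebesgue (S \<inter> T) \<le> BS + BT"
proof -
  define c where "c = \<bar>avg S h - avg T h\<bar>"
  interpret S: finite_measure "lebesgue_on S" by (rule shape_fin[OF shS])
  interpret T: finite_measure "lebesgue_on T" by (rule shape_fin[OF shT])
  have iS: "integrable (lebesgue_on S) (\<lambda>x. \<bar>h x - avg S h\<bar>)" using hS by auto
  have iT: "integrable (lebesgue_on T) (\<lambda>x. \<bar>h x - avg T h\<bar>)" using hT by auto
  note IS = ind_int[OF shS iS] and IT = ind_int[OF shT iT]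
  have sets: "S \<inter> T \<in> sets lebesgue" using shape_sets[OF shS] shape_sets[OF shT] by auto
  have fin: "emeasure lebesgue (S \<inter> T) < \<infinity>"
    using emeasure_mono[of "S \<inter> T" S lebesgue] shape_sets[OF shS] shS
    unfolding shape_def by (meson Int_lower1 le_less_trans)
  have iI: "integrable lebesgue (\<lambda>x. c * indicator (S \<inter> T) x)"
    using sets fin by (intro integrable_mult_right integrable_real_indicator)
  have "c * measure lebesgue (S \<inter> T) = (\<integral>x. c * indicator (S \<inter> T) x \<partial>lebesgue)"
    using sets fin by simp
  also have "\<dots> \<le> (\<integral>x. indicator S x * \<bar>h x - avg S h\<bar> + indicator T x * \<bar>h x - avg T h\<bar> \<partial>lebesgue)"
  proof (rule integral_mono[OF iI])
    show "integrable lebesgue (\<lambda>x. indicator S x * \<bar>h x - avg S h\<bar> + indicator T x * \<bar>h x - avg T h\<bar>)"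
      using IS(1) IT(1) by auto
    fix x
    show "c * indicator (S \<inter> T) x \<le> indicator S x * \<bar>h x - avg S h\<bar> + indicator T x * \<bar>h x - avg T h\<bar>"
      unfolding c_def by (auto simp: indicator_def)
  qed
  also have "\<dots> = (\<integral>x. \<bar>h x - avg S h\<bar> \<partial>lebesgue_on S) + (\<integral>x. \<bar>h x - avg T h\<bar> \<partial>lebesgue_on T)"
    using IS IT by simp
  also have "\<dots> \<le> BS + BT" using bS bT by simp
  finally show ?thesis unfolding c_def by (simp add: mult.commute)
qed

lemma series_limit:
  fixes F :: "nat \<Rightarrow> 'b \<Rightarrow> real"
  assumes fm: "finite_measure M" and iF: "\<And>n. integrable M (F n)"
    and sumb: "summable (\<lambda>k. \<integral>x. \<bar>F (Suc k) x - F k x\<bar> \<partial>M)"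
  shows "AE x in M. (\<lambda>n. F n x) \<longlonglongrightarrow> lim (\<lambda>n. F n x)"
    and "integrable M (\<lambda>x. lim (\<lambda>n. F n x))"
    and "(\<lambda>n. integral\<^sup>L M (F n)) \<longlonglongrightarrow> integral\<^sup>L M (\<lambda>x. lim (\<lambda>n. F n x))"
proof -
  define d where "d k x = F (Suc k) x - F k x" for k x
  have [measurable]: "\<And>n. F n \<in> borel_measurable M" using iF by auto
  have md[measurable]: "\<And>k. d k \<in> borel_measurable M" unfolding d_def by measurable
  have id: "\<And>k. integrable M (\<lambda>x. \<bar>d k x\<bar>)" unfolding d_def using iF by auto
  have "(\<integral>\<^sup>+x. (\<Sum>k. ennreal \<bar>d k x\<bar>) \<partial>M) = (\<Sum>k. \<integral>\<^sup>+x. ennreal \<bar>d k x\<bar> \<partial>M)"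
    by (intro nn_integral_suminf) measurable
  also have "\<dots> = (\<Sum>k. ennreal (\<integral>x. \<bar>d k x\<bar> \<partial>M))"
    by (intro suminf_cong nn_integral_eq_integral id) auto
  also have "\<dots> = ennreal (\<Sum>k. \<integral>x. \<bar>d k x\<bar> \<partial>M)"
    using sumb unfolding d_def by (intro suminf_ennreal2) auto
  finally have "(\<integral>\<^sup>+x. (\<Sum>k. ennreal \<bar>d k x\<bar>) \<partial>M) \<noteq> \<infinity>" by simp
  then have "AE x in M. (\<Sum>k. ennreal \<bar>d k x\<bar>) \<noteq> \<infinity>"
    by (intro nn_integral_PInf_AE) measurable
  then have aes: "AE x in M. summable (\<lambda>k. \<bar>d k x\<bar>)"
    by eventually_elim (intro summable_suminf_not_top, auto)
  define w where "w x = \<bar>F 0 x\<bar> + (\<Sum>k. \<bar>d k x\<bar>)" for x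
  have iw: "integrable M w"
    unfolding w_def
  proof (intro Bochner_Integration.integrable_add)
    show "integrable M (\<lambda>x. \<bar>F 0 x\<bar>)" using iF by auto
    show "integrable M (\<lambda>x. \<Sum>k. \<bar>d k x\<bar>)"
    proof (rule integrable_suminf)
      show "\<And>k. integrable M (\<lambda>x. \<bar>d k x\<bar>)" by (rule id)
      show "AE x in M. summable (\<lambda>k. norm \<bar>d k x\<bar>)" using aes by simp
      show "summable (\<lambda>k. \<integral>x. norm \<bar>d k x\<bar> \<partial>M)" using sumb unfolding d_def by simp
    qed
  qed
  have Fsum: "F n x = F 0 x + (\<Sum>k<n. d k x)" for n x
    unfolding d_def using sum_lessThan_telescope[of "\<lambda>k. F k x" n] by simp
  have aeconv: "AE x in M. (\<lambda>n. F n x) \<longlonglongrightarrow> lim (\<lambda>n. F n x)"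
    using aes
  proof eventually_elim
    case (elim x)
    then have "summable (\<lambda>k. d k x)" by (rule summable_rabs_cancel)
    then have "(\<lambda>n. F 0 x + (\<Sum>k<n. d k x)) \<longlonglongrightarrow> F 0 x + (\<Sum>k. d k x)"
      by (intro tendsto_add tendsto_const summable_LIMSEQ)
    moreover have "(\<lambda>n. F n x) = (\<lambda>n. F 0 x + (\<Sum>k<n. d k x))" by (rule ext, rule Fsum)
    ultimately have "convergent (\<lambda>n. F n x)" unfolding convergent_def by metis
    then show ?case by (simp add: convergent_LIMSEQ_iff)
  qed
  show "AE x in M. (\<lambda>n. F n x) \<longlonglongrightarrow> lim (\<lambda>n. F n x)" by (rule aeconv)
  have bnd: "AE x in M. norm (F n x) \<le> w x" for n
    using aes
  proof eventually_elim
    case (elim x)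
    have "\<bar>F n x\<bar> \<le> \<bar>F 0 x\<bar> + \<bar>\<Sum>k<n. d k x\<bar>" using Fsum[of n x] abs_triangle_ineq by metis
    also have "\<bar>\<Sum>k<n. d k x\<bar> \<le> (\<Sum>k<n. \<bar>d k x\<bar>)" by (rule sum_abs)
    also have "(\<Sum>k<n. \<bar>d k x\<bar>) \<le> (\<Sum>k. \<bar>d k x\<bar>)" using elim by (intro sum_le_suminf) auto
    finally show "norm (F n x) \<le> w x" unfolding w_def by simp
  qed
  have mg: "(\<lambda>x. lim (\<lambda>n. F n x)) \<in> borel_measurable M"
    by (intro borel_measurable_lim_metric) measurable
  show "integrable M (\<lambda>x. lim (\<lambda>n. F n x))"
    by (rule integrable_dominated_convergence[OF mg _ iw aeconv bnd]) measurable
  show "(\<lambda>n. integral\<^sup>L M (F n)) \<longlonglongrightarrow> integral\<^sup>L M (\<lambda>x. lim (\<lambda>n. F n x))"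
    by (rule integral_dominated_convergence[OF mg _ iw aeconv bnd]) measurable
qed

theorem theorem3p9:
  fixes \<Omega> :: "'a::euclidean_space set" and \<S> :: "'a set set" and p :: real
    and f :: "nat \<Rightarrow> 'a \<Rightarrow> real"
  assumes "domain \<Omega>"
    and "basis_of_shapes \<S> \<Omega>"
    and "1 \<le> p"
    and "\<forall>i. f i \<in> BMO p \<S>"
    and "\<forall>\<epsilon>>0. \<exists>N. \<forall>i\<ge>N. \<forall>j\<ge>N. bmo_norm p \<S> (\<lambda>x. f i x - f j x) < \<epsilon>"
  shows "\<exists>g \<in> BMO p \<S>. (\<lambda>i. bmo_norm p \<S> (\<lambda>x. f i x - g x)) \<longlonglongrightarrow> 0"
proof -
  have sh: "\<forall>S\<in>\<S>. shape S" and sub: "\<forall>S\<in>\<S>. S \<subseteq> \<Omega>" and cov: "\<Union>\<S> = \<Omega>"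
    using assms(2) unfolding basis_of_shapes_def by auto
  have p: "1 \<le> p" by fact
  have p0: "p > 0" using p by simp
  have fB: "\<And>i. f i \<in> BMO p \<S>" using assms(4) by auto
  show ?thesis
  proof (cases "\<S> = {}")
    case True
    have "(\<lambda>x. 0) \<in> BMO p \<S>" unfolding BMO_def True by auto
    moreover have "bmo_norm p \<S> h = 0" for h :: "'a \<Rightarrow> real"
    proof -
      have "{K::real. K \<ge> 0 \<and> (\<forall>S\<in>\<S>. osc p S h \<le> K)} = {0..}" unfolding True by auto
      then show ?thesis unfolding bmo_norm_def by simp
    qed
    ultimately show ?thesis by auto
  next
    case False
    then obtain S0 where S0: "S0 \<in> \<S>" by auto
    have "\<forall>k. \<exists>N. \<forall>i\<ge>N. \<forall>j\<ge>N. bmo_norm p \<S> (\<lambda>x. f i x - f j x) < (1/2::real)^k"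
      using assms(5) by simp
    then obtain Nk where Nk: "\<And>k i j. i \<ge> Nk k \<Longrightarrow> j \<ge> Nk k \<Longrightarrow> bmo_norm p \<S> (\<lambda>x. f i x - f j x) < (1/2::real)^k"
      by metis
    define \<phi> where "\<phi> k = (\<Sum>j\<le>k. Nk j) + k" for k
    have \<phi>N: "Nk k \<le> \<phi> k" for k
      unfolding \<phi>_def using member_le_sum[of k "{..k}" Nk] by simp
    have \<phi>S: "Nk k \<le> \<phi> (Suc k)" for k
      unfolding \<phi>_def using member_le_sum[of k "{..Suc k}" Nk] by simp
    have \<phi>k: "k \<le> \<phi> k" for k unfolding \<phi>_def by simp
    define h where "h k = (\<lambda>x. f (\<phi> (Suc k)) x - f (\<phi> k) x)" for k
    have hB: "h k \<in> BMO p \<S>" for k unfolding h_def by (rule bmo_diff[OF sh p fB fB])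
    have hosc: "osc p T (h k) \<le> (1/2)^k" if "T \<in> \<S>" for k T
    proof -
      have "osc p T (h k) \<le> bmo_norm p \<S> (h k)" by (rule osc_le_norm[OF hB that])
      also have "\<dots> < (1/2)^k" unfolding h_def by (rule Nk[OF \<phi>S \<phi>N])
      finally show ?thesis by simp
    qed
    have hL1: "(\<integral>x. \<bar>h k x - avg T (h k)\<bar> \<partial>lebesgue_on T) \<le> 2 * (1/2)^k * measure lebesgue T"
      if T: "T \<in> \<S>" for k T
    proof -
      have shT: "shape T" using sh T by auto
      interpret finite_measure "lebesgue_on T" by (rule shape_fin[OF shT])
      have m: "measure (lebesgue_on T) (space (lebesgue_on T)) > 0" by (rule shape_m[OF shT])
      have ih: "integrable (lebesgue_on T) (h k)"
        and ip: "integrable (lebesgue_on T) (\<lambda>x. \<bar>h k x - avg T (h k)\<bar> powr p)"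
        using hB[of k] T unfolding BMO_def by (auto simp: sint_eq[OF shT])
      have iv: "integrable (lebesgue_on T) (\<lambda>x. h k x - avg T (h k))" using ih by simp
      have e: "(1/2::real)^k > 0" by simp
      have "mE p (lebesgue_on T) (h k) \<le> ((1/2)^k) powr p"
        using hosc[OF T, of k] osc_le_iff[OF shT p0, of "(1/2)^k" "h k"] by simp
      then have b: "(\<integral>x. \<bar>h k x - avg T (h k)\<bar> powr p \<partial>lebesgue_on T)
          \<le> ((1/2)^k) powr p * measure (lebesgue_on T) (space (lebesgue_on T))"
        unfolding avg_eq[OF shT] mE_int[OF m] using m by (simp add: mult.commute)
      have "(\<integral>x. \<bar>h k x - avg T (h k)\<bar> \<partial>lebesgue_on T) \<le> 2 * (1/2)^k * measure (lebesgue_on T) (space (lebesgue_on T))"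
        by (rule l1_bound[OF shape_fin[OF shT] p e iv ip b])
      then show ?thesis unfolding shape_meas[OF shT] .
    qed
    define A where "A k = avg S0 (f (\<phi> k))" for k
    define c where "c k = avg S0 (h k)" for k
    have c_eq: "c k = A (Suc k) - A k" for k
    proof -
      have shS0: "shape S0" using sh S0 by auto
      have "integrable (lebesgue_on S0) (f i)" for i
        using fB[of i] S0 unfolding BMO_def by (auto simp: sint_eq[OF shS0])
      then show ?thesis unfolding c_def A_def h_def avg_eq[OF shS0] by (simp add: mavg_diff)
    qed
    define good where "good T \<longleftrightarrow> (\<exists>C. \<forall>k. \<bar>avg T (h k) - c k\<bar> \<le> C * (1/2)^k)" for T
    have goodS0: "good S0" unfolding good_def c_def by (intro exI[of _ 0]) simp
    have propag: "good T" if S: "S \<in> \<S>" and T: "T \<in> \<S>" and gS: "good S" and ne: "S \<inter> T \<noteq> {}" for S T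
    proof -
      obtain C where C: "\<And>k. \<bar>avg S (h k) - c k\<bar> \<le> C * (1/2)^k" using gS unfolding good_def by auto
      have shS: "shape S" and shT: "shape T" using sh S T by auto
      have Ipos: "0 < measure lebesgue (S \<inter> T)"
        using shS shT ne by (intro open_pos[of "S \<inter> T" S]) (auto simp: shape_def)
      define D where "D = C + 2 * (measure lebesgue S + measure lebesgue T) / measure lebesgue (S \<inter> T)"
      have "\<bar>avg T (h k) - c k\<bar> \<le> D * (1/2)^k" for k
      proof -
        have hS: "integrable (lebesgue_on S) (h k)" using hB[of k] S unfolding BMO_def by (auto simp: sint_eq[OF shS])
        have hT: "integrable (lebesgue_on T) (h k)" using hB[of k] T unfolding BMO_def by (auto simp: sint_eq[OF shT])
        have "\<bar>avg S (h k) - avg T (h k)\<bar> * measure lebesgue (S \<inter> T)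
           \<le> 2 * (1/2)^k * measure lebesgue S + 2 * (1/2)^k * measure lebesgue T"
          by (rule avg_close[OF shS shT ne hS hT hL1[OF S] hL1[OF T]])
        then have "\<bar>avg S (h k) - avg T (h k)\<bar>
           \<le> (2 * (1/2)^k * measure lebesgue S + 2 * (1/2)^k * measure lebesgue T) / measure lebesgue (S \<inter> T)"
          using Ipos by (simp add: pos_le_divide_eq)
        also have "\<dots> = (2 * (measure lebesgue S + measure lebesgue T) / measure lebesgue (S \<inter> T)) * (1/2)^k"
          using Ipos by (simp add: field_simps)
        finally have "\<bar>avg S (h k) - avg T (h k)\<bar> \<le> (2 * (measure lebesgue S + measure lebesgue T) / measure lebesgue (S \<inter> T)) * (1/2)^k" .
        with C[of k] show ?thesis unfolding D_def by (simp add: distrib_right)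
      qed
      then show ?thesis unfolding good_def by blast
    qed
    have nonempty: "T \<noteq> {}" if "T \<in> \<S>" for T
    proof
      assume "T = {}"
      then have "measure lebesgue T = 0" by simp
      with shape_pos[of T] sh that show False by auto
    qed
    have allgood: "good T" if T: "T \<in> \<S>" for T
    proof (rule ccontr)
      assume bad: "\<not> good T"
      define U where "U = \<Union>{S\<in>\<S>. good S}"
      define V where "V = \<Union>{S\<in>\<S>. \<not> good S}"
      have oU: "open U" unfolding U_def using sh by (intro open_Union) (auto simp: shape_def)
      have oV: "open V" unfolding V_def using sh by (intro open_Union) (auto simp: shape_def)
      have conn: "connected \<Omega>" using assms(1) unfolding domain_def by auto
      have dis: "U \<inter> V \<inter> \<Omega> = {}"
        unfolding U_def V_def using propag by blast
      have cv: "\<Omega> \<subseteq> U \<union> V" unfolding U_def V_def using cov by blast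
      have "U \<inter> \<Omega> = {} \<or> V \<inter> \<Omega> = {}" by (rule connectedD[OF conn oU oV dis cv])
      moreover have "U \<inter> \<Omega> \<noteq> {}"
        using S0 goodS0 nonempty[OF S0] sub unfolding U_def by blast
      moreover have "V \<inter> \<Omega> \<noteq> {}"
        using T bad nonempty[OF T] sub unfolding V_def by blast
      ultimately show False by blast
    qed
    define F where "F n x = f (\<phi> n) x - A n" for n x
    define g where "g = (\<lambda>x. lim (\<lambda>n. F n x))"
    have perT: "(AE x in lebesgue_on T. (\<lambda>n. F n x) \<longlonglongrightarrow> g x)
       \<and> integrable (lebesgue_on T) g
       \<and> (\<lambda>n. integral\<^sup>L (lebesgue_on T) (F n)) \<longlonglongrightarrow> integral\<^sup>L (lebesgue_on T) g"
      if T: "T \<in> \<S>" for T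
    proof -
      have shT: "shape T" using sh T by auto
      interpret finite_measure "lebesgue_on T" by (rule shape_fin[OF shT])
      have ifi: "integrable (lebesgue_on T) (f i)" for i
        using fB[of i] T unfolding BMO_def by (auto simp: sint_eq[OF shT])
      have iF: "integrable (lebesgue_on T) (F n)" for n
        unfolding F_def[abs_def] using ifi by simp
      obtain C where C: "\<And>k. \<bar>avg T (h k) - c k\<bar> \<le> C * (1/2)^k"
        using allgood[OF T] unfolding good_def by auto
      have dk: "F (Suc k) x - F k x = h k x - c k" for k x
        unfolding F_def h_def c_eq by simp
      have bk: "(\<integral>x. \<bar>F (Suc k) x - F k x\<bar> \<partial>lebesgue_on T) \<le> (2 + C) * measure lebesgue T * (1/2)^k" for k
      proof -
        have ih: "integrable (lebesgue_on T) (h k)" unfolding h_def using ifi by simp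
        have "(\<integral>x. \<bar>F (Suc k) x - F k x\<bar> \<partial>lebesgue_on T)
            \<le> (\<integral>x. \<bar>h k x - avg T (h k)\<bar> + \<bar>avg T (h k) - c k\<bar> \<partial>lebesgue_on T)"
          unfolding dk using ih by (intro integral_mono) auto
        also have "\<dots> = (\<integral>x. \<bar>h k x - avg T (h k)\<bar> \<partial>lebesgue_on T) + measure lebesgue T * \<bar>avg T (h k) - c k\<bar>"
          using ih shape_meas[OF shT] by simp
        also have "\<dots> \<le> 2 * (1/2)^k * measure lebesgue T + measure lebesgue T * (C * (1/2)^k)"
          using hL1[OF T, of k] C[of k] shape_pos[OF shT] by (intro add_mono mult_left_mono) auto
        also have "\<dots> = (2 + C) * measure lebesgue T * (1/2)^k" by (simp add: algebra_simps)
        finally show ?thesis .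
      qed
      have sumb: "summable (\<lambda>k. \<integral>x. \<bar>F (Suc k) x - F k x\<bar> \<partial>lebesgue_on T)"
      proof (rule summable_comparison_test'[where N=0])
        show "summable (\<lambda>k. (2 + C) * measure lebesgue T * (1/2::real)^k)"
          by (intro summable_mult summable_geometric) simp
        fix k
        show "norm (\<integral>x. \<bar>F (Suc k) x - F k x\<bar> \<partial>lebesgue_on T) \<le> (2 + C) * measure lebesgue T * (1/2)^k"
          using bk[of k] by simp
      qed
      note sl = series_limit[OF shape_fin[OF shT] iF sumb]
      show ?thesis using sl unfolding g_def by simp
    qed
    have key: "integrable (lebesgue_on T) (\<lambda>x. \<bar>(f i x - g x) - mavg (lebesgue_on T) (\<lambda>x. f i x - g x)\<bar> powr p)
      \<and> (\<integral>x. \<bar>(f i x - g x) - mavg (lebesgue_on T) (\<lambda>x. f i x - g x)\<bar> powr p \<partial>lebesgue_on T) \<le> measure lebesgue T * \<epsilon> powr p"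
      if T: "T \<in> \<S>" and \<epsilon>: "\<epsilon> > 0" and N: "\<forall>a\<ge>N. \<forall>b\<ge>N. bmo_norm p \<S> (\<lambda>x. f a x - f b x) < \<epsilon>"
        and i: "i \<ge> N" for T \<epsilon> N i
    proof -
      have shT: "shape T" using sh T by auto
      interpret finite_measure "lebesgue_on T" by (rule shape_fin[OF shT])
      have m: "measure (lebesgue_on T) (space (lebesgue_on T)) > 0" by (rule shape_m[OF shT])
      have ifi: "integrable (lebesgue_on T) (f i)" for i
        using fB[of i] T unfolding BMO_def by (auto simp: sint_eq[OF shT])
      have iF: "integrable (lebesgue_on T) (F n)" for n
        unfolding F_def[abs_def] using ifi by simp
      have ev: "integrable (lebesgue_on T) (\<lambda>x. \<bar>(f i x - F n x) - mavg (lebesgue_on T) (\<lambda>x. f i x - F n x)\<bar> powr p)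
        \<and> (\<integral>x. \<bar>(f i x - F n x) - mavg (lebesgue_on T) (\<lambda>x. f i x - F n x)\<bar> powr p \<partial>lebesgue_on T)
          \<le> measure lebesgue T * \<epsilon> powr p" if n: "n \<ge> N" for n
      proof -
        define v where "v = (\<lambda>x. f i x - f (\<phi> n) x)"
        have vB: "v \<in> BMO p \<S>" unfolding v_def by (rule bmo_diff[OF sh p fB fB])
        have iv: "integrable (lebesgue_on T) v" unfolding v_def using ifi by simp
        have E1: "(\<lambda>x. f i x - F n x) = (\<lambda>x. v x + A n)" unfolding v_def F_def by (simp add: fun_eq_iff)
        have E2: "mavg (lebesgue_on T) (\<lambda>x. f i x - F n x) = mavg (lebesgue_on T) v + A n"
          unfolding E1 by (rule mavg_shift[OF shape_fin[OF shT] iv m])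
        have E3: "(\<lambda>x. \<bar>(f i x - F n x) - mavg (lebesgue_on T) (\<lambda>x. f i x - F n x)\<bar> powr p)
            = (\<lambda>x. \<bar>v x - mavg (lebesgue_on T) v\<bar> powr p)"
        proof (rule ext)
          fix x
          have eqx: "(f i x - F n x) - (mavg (lebesgue_on T) v + A n) = v x - mavg (lebesgue_on T) v"
            unfolding v_def F_def by simp
          then show "\<bar>(f i x - F n x) - mavg (lebesgue_on T) (\<lambda>x. f i x - F n x)\<bar> powr p
            = \<bar>v x - mavg (lebesgue_on T) v\<bar> powr p" unfolding E2 by (simp only: eqx)
        qed
        have ip: "integrable (lebesgue_on T) (\<lambda>x. \<bar>v x - mavg (lebesgue_on T) v\<bar> powr p)"
          using vB T unfolding BMO_def by (auto simp: sint_eq[OF shT] avg_eq[OF shT])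
        have "osc p T v \<le> bmo_norm p \<S> v" by (rule osc_le_norm[OF vB T])
        also have "\<dots> < \<epsilon>" unfolding v_def using N i n \<phi>k[of n] by auto
        finally have "mE p (lebesgue_on T) v \<le> \<epsilon> powr p"
          using osc_le_iff[OF shT p0, of \<epsilon> v] \<epsilon> by simp
        then have "(\<integral>x. \<bar>v x - mavg (lebesgue_on T) v\<bar> powr p \<partial>lebesgue_on T) \<le> measure lebesgue T * \<epsilon> powr p"
          unfolding mE_int[OF m] shape_meas[OF shT] using shape_pos[OF shT] by simp
        with ip show ?thesis unfolding E3 by simp
      qed
      have Bnn: "measure lebesgue T * \<epsilon> powr p \<ge> 0" using shape_pos[OF shT] by simp
      have ae: "AE x in lebesgue_on T. (\<lambda>n. F n x) \<longlonglongrightarrow> g x"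
        and ig: "integrable (lebesgue_on T) g"
        and int: "(\<lambda>n. integral\<^sup>L (lebesgue_on T) (F n)) \<longlonglongrightarrow> integral\<^sup>L (lebesgue_on T) g"
        using perT[OF T] by auto
      show ?thesis
        using fatou_osc[OF shape_fin[OF shT] p0 ifi[of i] iF ig ae int ev Bnn] by auto
    qed
    obtain N1 where N1: "\<forall>a\<ge>N1. \<forall>b\<ge>N1. bmo_norm p \<S> (\<lambda>x. f a x - f b x) < 1"
      using assms(5) by (meson zero_less_one)
    obtain Ku where Ku: "Ku \<ge> 0" "\<forall>S\<in>\<S>. osc p S (f N1) \<le> Ku" using fB[of N1] unfolding BMO_def by auto
    define K where "K = (2 powr p * (Ku powr p + 1)) powr (1/p)"
    have gT: "set_integrable lebesgue T g \<and> set_integrable lebesgue T (\<lambda>x. \<bar>g x - avg T g\<bar> powr p)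
       \<and> osc p T g \<le> K" if T: "T \<in> \<S>" for T
    proof -
      have shT: "shape T" using sh T by auto
      interpret finite_measure "lebesgue_on T" by (rule shape_fin[OF shT])
      have m: "measure (lebesgue_on T) (space (lebesgue_on T)) > 0" by (rule shape_m[OF shT])
      have iu: "integrable (lebesgue_on T) (f N1)"
        and pu: "integrable (lebesgue_on T) (\<lambda>x. \<bar>f N1 x - mavg (lebesgue_on T) (f N1)\<bar> powr p)"
        using fB[of N1] T unfolding BMO_def by (auto simp: sint_eq[OF shT] avg_eq[OF shT])
      have ig: "integrable (lebesgue_on T) g" using perT[OF T] by auto
      have iw: "integrable (lebesgue_on T) (\<lambda>x. f N1 x - g x)" using iu ig by auto
      note kk = key[OF T zero_less_one N1 order_refl]
      have eu: "mE p (lebesgue_on T) (f N1) \<le> Ku powr p"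
        using Ku T osc_le_iff[OF shT p0, of Ku "f N1"] by auto
      note q = quasi[OF shape_fin[OF shT] p0 iu iw pu kk[THEN conjunct1]]
      have gg: "(\<lambda>x. f N1 x - (f N1 x - g x)) = g" by auto
      have pg: "integrable (lebesgue_on T) (\<lambda>x. \<bar>g x - mavg (lebesgue_on T) g\<bar> powr p)"
        using q(1) unfolding gg by simp
      have "measure lebesgue T * mE p (lebesgue_on T) g
          = (\<integral>x. \<bar>g x - mavg (lebesgue_on T) g\<bar> powr p \<partial>lebesgue_on T)"
        using mE_int[OF m, where f=g and p=p] shape_meas[OF shT] by simp
      also have "\<dots> \<le> 2 powr p * ((\<integral>x. \<bar>f N1 x - mavg (lebesgue_on T) (f N1)\<bar> powr p \<partial>lebesgue_on T)
            + (\<integral>x. \<bar>(f N1 x - g x) - mavg (lebesgue_on T) (\<lambda>x. f N1 x - g x)\<bar> powr p \<partial>lebesgue_on T))"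
        using q(2) unfolding gg by simp
      also have "\<dots> \<le> 2 powr p * (measure lebesgue T * Ku powr p + measure lebesgue T * 1 powr p)"
      proof (intro mult_left_mono add_mono)
        show "(\<integral>x. \<bar>f N1 x - mavg (lebesgue_on T) (f N1)\<bar> powr p \<partial>lebesgue_on T) \<le> measure lebesgue T * Ku powr p"
          unfolding mE_int[OF m] shape_meas[OF shT] using eu shape_pos[OF shT] by simp
        show "(\<integral>x. \<bar>(f N1 x - g x) - mavg (lebesgue_on T) (\<lambda>x. f N1 x - g x)\<bar> powr p \<partial>lebesgue_on T) \<le> measure lebesgue T * 1 powr p"
          using kk by simp
      qed simp
      also have "\<dots> = measure lebesgue T * (2 powr p * (Ku powr p + 1))" by (simp add: algebra_simps)
      finally have "mE p (lebesgue_on T) g \<le> 2 powr p * (Ku powr p + 1)"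
        using shape_pos[OF shT] by (rule mult_left_le_imp_le)
      then have "osc p T g \<le> K"
        unfolding osc_eq[OF shT] K_def using m p0 by (intro powr_mono2 mE_nonneg) auto
      then show ?thesis using ig pg by (simp add: sint_eq[OF shT] avg_eq[OF shT])
    qed
    have gB: "g \<in> BMO p \<S>"
    proof -
      have "K \<ge> 0" unfolding K_def by simp
      then show ?thesis using gT unfolding BMO_def by blast
    qed
    have "(\<lambda>i. bmo_norm p \<S> (\<lambda>x. f i x - g x)) \<longlonglongrightarrow> 0"
    proof (rule LIMSEQ_I)
      fix r :: real assume r: "r > 0"
      then obtain N where N: "\<forall>a\<ge>N. \<forall>b\<ge>N. bmo_norm p \<S> (\<lambda>x. f a x - f b x) < r/2"
        using assms(5) by (meson half_gt_zero)
      have "norm (bmo_norm p \<S> (\<lambda>x. f i x - g x) - 0) < r" if i: "i \<ge> N" for i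
      proof -
        have "osc p T (\<lambda>x. f i x - g x) \<le> r/2" if T: "T \<in> \<S>" for T
        proof -
          have shT: "shape T" using sh T by auto
          have m: "measure (lebesgue_on T) (space (lebesgue_on T)) > 0" by (rule shape_m[OF shT])
          note kk = key[OF T _ N i] 
          have "measure lebesgue T * mE p (lebesgue_on T) (\<lambda>x. f i x - g x) \<le> measure lebesgue T * (r/2) powr p"
            using kk r mE_int[OF m, where f="\<lambda>x. f i x - g x" and p=p] shape_meas[OF shT] by simp
          then have "mE p (lebesgue_on T) (\<lambda>x. f i x - g x) \<le> (r/2) powr p"
            using shape_pos[OF shT] by (rule mult_left_le_imp_le)
          then show ?thesis using osc_le_iff[OF shT p0, of "r/2"] r by simp
        qed
        then have "bmo_norm p \<S> (\<lambda>x. f i x - g x) \<le> r/2" using r by (intro norm_le) auto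
        moreover have "0 \<le> bmo_norm p \<S> (\<lambda>x. f i x - g x)"
          by (rule norm_nonneg[OF bmo_diff[OF sh p fB gB]])
        ultimately show ?thesis using r by simp
      qed
      then show "\<exists>no. \<forall>n\<ge>no. norm (bmo_norm p \<S> (\<lambda>x. f n x - g x) - 0) < r" by blast
    qed
    with gB show ?thesis by blast
  qed
qed

end
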